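(* Let $-D/2\le x_{\rm I}<x_{\rm F}\le D/2$, and let $(r_1^{\rm I},r_2^{\rm I})\in\partial\mathcal{C}_f(x_{\rm I})$ and $(r_1^{\rm F},r_2^{\rm F})\in\partial\mathcal{C}_f(x_{\rm F})$ be the points at which the upper-right common tangent line of $\mathcal{C}_f(x_{\rm I})$ and $\mathcal{C}_f(x_{\rm F})$ (the supporting line of $\mathrm{Conv}(\mathcal{C}_f(x_{\rm I})\cup\mathcal{C}_f(x_{\rm F}))$ touching both sets) touches them. Define the triangle region $$\mathcal{C}_{\rm IF}=\left\{(r_1,r_2): r_2\le k_{\rm IF}(r_1-r_1^{\rm I})+r_2^{\rm I},\ r_1\ge0,\ r_2\ge0\right\},\qquad k_{\rm IF}=\frac{r_2^{\rm I}-r_2^{\rm F}}{r_1^{\rm I}-r_1^{\rm F}}.$$ Then for any location $x\in[x_{\rm I},x_{\rm F}]$, $\mathcal{C}_f(x)\subseteq\mathrm{Conv}\big(\mathcal{C}_f(x_{\rm I})\cup\mathcal{C}_f(x_{\rm F})\big)$ if and only if $\mathcal{C}_f(x)\subseteq\mathcal{C}_{\rm IF}$.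
   Context: Fix $D>0$, $H>0$, $\beta_0>0$, $\bar P>0$. Ground users GU 1, GU 2 are at horizontal positions $x_1=-D/2$, $x_2=D/2$; for a UAV at horizontal position $x$ (altitude $H$), $h_k(x)=\beta_0/((x-x_k)^2+H^2)$. For $p_1,p_2\ge0$, $\mathcal{C}_{\rm MAC}(x,p_1,p_2)$ is the set of $(r_1,r_2)$, $r_1,r_2\ge0$, with $r_1\le\log_2(1+p_1h_1(x))$, $r_2\le\log_2(1+p_2h_2(x))$, $r_1+r_2\le\log_2(1+p_1h_1(x)+p_2h_2(x))$; the fixed-location capacity region is $\mathcal{C}_f(x)=\bigcup_{p_1,p_2\ge0,\,p_1+p_2\le\bar P}\mathcal{C}_{\rm MAC}(x,p_1,p_2)$ (a convex set). $\partial$ denotes boundary and $\mathrm{Conv}$ convex hull. *)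

theory Defs
  imports "HOL-Analysis.Analysis"
begin

text \<open>Channel gain from a UAV at horizontal position x (altitude H) to a ground user
  at horizontal position xk.\<close>
definition chan_gain :: "real \<Rightarrow> real \<Rightarrow> real \<Rightarrow> real \<Rightarrow> real" where
  "chan_gain \<beta>0 H xk x = \<beta>0 / ((x - xk)^2 + H^2)"

definition h1 :: "real \<Rightarrow> real \<Rightarrow> real \<Rightarrow> real \<Rightarrow> real" where
  "h1 D H \<beta>0 x = chan_gain \<beta>0 H (- D / 2) x"

definition h2 :: "real \<Rightarrow> real \<Rightarrow> real \<Rightarrow> real \<Rightarrow> real" where
  "h2 D H \<beta>0 x = chan_gain \<beta>0 H (D / 2) x"

definition C_MAC :: "real \<Rightarrow> real \<Rightarrow> real \<Rightarrow> real \<Rightarrow> real \<Rightarrow> real \<Rightarrow> (real \<times> real) set" where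
  "C_MAC D H \<beta>0 x p1 p2 = {(r1, r2). r1 \<ge> 0 \<and> r2 \<ge> 0 \<and>
      r1 \<le> log 2 (1 + p1 * h1 D H \<beta>0 x) \<and>
      r2 \<le> log 2 (1 + p2 * h2 D H \<beta>0 x) \<and>
      r1 + r2 \<le> log 2 (1 + p1 * h1 D H \<beta>0 x + p2 * h2 D H \<beta>0 x)}"

definition C_f :: "real \<Rightarrow> real \<Rightarrow> real \<Rightarrow> real \<Rightarrow> real \<Rightarrow> (real \<times> real) set" where
  "C_f D H \<beta>0 Pbar x =
     (\<Union>{C_MAC D H \<beta>0 x p1 p2 | p1 p2. p1 \<ge> 0 \<and> p2 \<ge> 0 \<and> p1 + p2 \<le> Pbar})"

end

theory Submission
  imports Defs
begin


definition G :: "real \<Rightarrow> real \<Rightarrow> real \<Rightarrow> real \<Rightarrow> real" where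
  "G a g y z = a*y + g*z + min a g * y * z"

definition reg :: "real \<Rightarrow> real \<Rightarrow> real \<Rightarrow> (real \<times> real) set" where
  "reg a g P = {(r1,r2). 0 \<le> r1 \<and> 0 \<le> r2 \<and> G a g (2 powr r1 - 1) (2 powr r2 - 1) \<le> P}"

lemma G_mono:
  assumes "a > 0" "g > 0" "0 \<le> y" "y \<le> y'" "0 \<le> z" "z \<le> z'"
  shows "G a g y z \<le> G a g y' z'"
proof -
  have "min a g * y * z \<le> min a g * y' * z'"
    using assms by (intro mult_mono) auto
  then show ?thesis unfolding G_def using assms
    by (smt (verit) mult_left_mono)
qed

lemma reg_down:
  assumes "a > 0" "g > 0" "(r1,r2) \<in> reg a g P" "0 \<le> s1" "s1 \<le> r1" "0 \<le> s2" "s2 \<le> r2"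
  shows "(s1,s2) \<in> reg a g P"
proof -
  have "G a g (2 powr s1 - 1) (2 powr s2 - 1) \<le> G a g (2 powr r1 - 1) (2 powr r2 - 1)"
    using assms by (intro G_mono) (auto simp: ge_one_powr_ge_zero)
  then show ?thesis using assms unfolding reg_def by auto
qed

lemma G_swap: "G a g y z = G g a z y"
  unfolding G_def by (simp add: min.commute algebra_simps)

lemma reg_swap: "(r1,r2) \<in> reg a g P \<longleftrightarrow> (r2,r1) \<in> reg g a P"
  unfolding reg_def using G_swap by auto



lemma SC:
  assumes "0 < g2" "g2 < g1" "0 < a1" "a1 \<le> a2" "0 < P"
   "0 \<le> yp" "0 \<le> zp" "0 \<le> yq" "0 \<le> zq" "yq \<le> yp" "zp \<le> zq"
   "G a2 g2 yp zp \<le> P" "P < G a1 g1 yp zp" "G a1 g1 yq zq \<le> P"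
  shows "G a2 g2 yq zq < P"
proof -
  define m1 where "m1 = min a1 g1"
  define m2 where "m2 = min a2 g2"
  define df where "df y z = (a2-a1)*y - (g1-g2)*z + (m2-m1)*y*z" for y z
  have dfG: "G a2 g2 y z = G a1 g1 y z + df y z" for y z
    unfolding G_def df_def m1_def m2_def by (simp add: algebra_simps)
  have dp: "df yp zp < 0" using dfG[of yp zp] assms by linarith
  show ?thesis
  proof (cases "yq = 0")
    case True
    show ?thesis
    proof (cases "zq = 0")
      case True
      with \<open>yq = 0\<close> show ?thesis using assms by (simp add: G_def)
    next
      case False
      then have "g2 * zq < g1 * zq" using assms by auto
      then show ?thesis using assms \<open>yq = 0\<close> by (simp add: G_def)
    qed
  next
    case False
    then have yq: "yq > 0" using assms by auto
    have zp: "zp > 0"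
    proof (rule ccontr)
      assume "\<not> zp > 0"
      then have "zp = 0" using assms by auto
      then have "df yp zp = (a2-a1)*yp" by (simp add: df_def)
      also have "\<dots> \<ge> 0" using assms by auto
      finally show False using dp by simp
    qed
    have yp: "yp > 0" using yq assms by auto
    have zq: "zq > 0" using zp assms by auto
    have id: "df yq zq * (yp*zp) - df yp zp * (yq*zq)
       = (a2-a1)*yq*yp*(zp - zq) - (g1-g2)*zq*zp*(yp - yq)"
      unfolding df_def by (simp add: algebra_simps)
    have t1: "(a2-a1)*yq*yp*(zp - zq) \<le> 0"
      using assms yq yp by (intro mult_nonneg_nonpos) auto
    have t2: "(g1-g2)*zq*zp*(yp - yq) \<ge> 0"
      using assms zq zp by (intro mult_nonneg_nonneg) auto
    have "df yp zp * (yq*zq) < 0" using dp yq zq by (simp add: mult_neg_pos)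
    then have "df yq zq * (yp*zp) < 0" using id t1 t2 by linarith
    then have "df yq zq < 0" using yp zp
      by (auto simp: mult_less_0_iff)
    then show ?thesis using dfG[of yq zq] assms by linarith
  qed
qed



lemma side:
  assumes "0 < a1" "a1 \<le> a2" "0 < g2" "g2 < g1" "0 < P" "0 < ta" "0 < tb"
   and q: "(q1,q2) \<in> reg a1 g1 P" "ta*q1 + tb*q2 = c"
   and L: "\<forall>r\<in>reg a2 g2 P. ta * fst r + tb * snd r \<le> c"
   and p: "(p1,p2) \<in> reg a2 g2 P" "(p1,p2) \<notin> reg a1 g1 P"
   and w: "0 \<le> w1" "0 \<le> w2" "w2*ta \<le> w1*tb" "w1*q1 + w2*q2 < w1*p1 + w2*p2"
  shows False
proof -
  have Lp: "ta*p1 + tb*p2 \<le> c" using L p by force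
  consider "p1 < q1" | "q1 \<le> p1" "q2 < p2" | "q1 \<le> p1" "p2 \<le> q2" by linarith
  then show False
  proof cases
    case 1
    have "w1*(q1-p1) \<ge> 0" using 1 w by auto
    then have h: "w2*(p2-q2) > w1*(q1-p1)" using w by (simp add: algebra_simps)
    then have w2: "w2 > 0" using w \<open>w1*(q1-p1) \<ge> 0\<close>
      by (metis less_eq_real_def mult_zero_left not_less)
    have "tb*(w2*(p2-q2)) > tb*(w1*(q1-p1))" using h \<open>0<tb\<close> by simp
    moreover have "tb*(w1*(q1-p1)) \<ge> ta*(w2*(q1-p1))"
    proof -
      have "(w1*tb)*(q1-p1) \<ge> (w2*ta)*(q1-p1)" using w 1 by (intro mult_right_mono) auto
      then show ?thesis by (simp add: algebra_simps)
    qed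
    ultimately have "w2*(tb*(p2-q2)) > w2*(ta*(q1-p1))" by (simp add: algebra_simps)
    then have "tb*(p2-q2) > ta*(q1-p1)" using w2 by simp
    then show False using Lp q by (simp add: algebra_simps)
  next
    case 2
    have "ta*q1 \<le> ta*p1" using 2 \<open>0<ta\<close> by simp
    moreover have "tb*q2 < tb*p2" using 2 \<open>0<tb\<close> by simp
    ultimately show False using Lp q by linarith
  next
    case 3
    define yp where "yp = 2 powr p1 - 1"
    define zp where "zp = 2 powr p2 - 1"
    define yq where "yq = 2 powr q1 - 1"
    define zq where "zq = 2 powr q2 - 1"
    have pr: "0 \<le> p1" "0 \<le> p2" "G a2 g2 yp zp \<le> P" "\<not> G a1 g1 yp zp \<le> P"
      using p unfolding reg_def yp_def zp_def by auto
    have qr: "0 \<le> q1" "0 \<le> q2" "G a1 g1 yq zq \<le> P"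
      using q unfolding reg_def yq_def zq_def by auto
    have nn: "0 \<le> yp" "0 \<le> zp" "0 \<le> yq" "0 \<le> zq"
      using pr qr unfolding yp_def zp_def yq_def zq_def by (auto simp: ge_one_powr_ge_zero)
    have "yq \<le> yp" "zp \<le> zq" using 3 unfolding yp_def zp_def yq_def zq_def by auto
    then have lt: "G a2 g2 yq zq < P"
      using SC[of g2 g1 a1 a2 P yp zp yq zq] assms pr qr nn by linarith
    define m where "m = min a2 g2"
    have m0: "m > 0" using assms by (simp add: m_def)
    define k where "k = g2 + m*yq"
    have k0: "k > 0" using m0 nn assms unfolding k_def by (simp add: add_pos_nonneg)
    define z' where "z' = zq + (P - G a2 g2 yq zq)/k"
    have z'gt: "z' > zq" unfolding z'_def using lt k0 by simp
    have lin: "G a2 g2 yq z' = G a2 g2 yq zq + k*(z' - zq)"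
      unfolding G_def k_def m_def by (simp add: algebra_simps)
    have "k*(z' - zq) = P - G a2 g2 yq zq" unfolding z'_def using k0 by simp
    then have Gz: "G a2 g2 yq z' = P" using lin by simp
    define q2' where "q2' = log 2 (1 + z')"
    have pos: "1 + z' > 0" using z'gt nn by simp
    have e: "2 powr q2' - 1 = z'" unfolding q2'_def using pos by simp
    have "2 powr q2 < 1 + z'" using z'gt unfolding zq_def by simp
    then have gt: "q2 < q2'" unfolding q2'_def using pos by (simp add: less_log_iff)
    have "(q1, q2') \<in> reg a2 g2 P"
      unfolding reg_def using qr gt e Gz by (simp add: yq_def)
    then have "ta*q1 + tb*q2' \<le> c" using L by force
    moreover have "tb*q2 < tb*q2'" using gt \<open>0<tb\<close> by simp
    ultimately show False using q by linarith
  qed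
qed



lemma G_le:
  assumes "0 < a" "0 < g" "0 \<le> y" "0 \<le> z" "y \<le> g1" "z \<le> g2" "(1+y)*(1+z) \<le> 1+g1+g2"
  shows "G a g y z \<le> a*g1 + g*g2"
proof (cases "g \<le> a")
  case True
  have s: "z + y*z \<le> g1 + g2 - y" using assms(7) by (simp add: algebra_simps)
  have "G a g y z = a*y + g*(z + y*z)" using True by (simp add: G_def min_def algebra_simps)
  also have "\<dots> \<le> a*y + g*(g1+g2-y)" using s assms by (intro add_left_mono mult_left_mono) auto
  also have "\<dots> = (a-g)*y + g*(g1+g2)" by (simp add: algebra_simps)
  also have "\<dots> \<le> (a-g)*g1 + g*(g1+g2)" using True assms by (intro add_right_mono mult_left_mono) auto
  also have "\<dots> = a*g1 + g*g2" by (simp add: algebra_simps)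
  finally show ?thesis .
next
  case False
  have s: "y + y*z \<le> g1 + g2 - z" using assms(7) by (simp add: algebra_simps)
  have "G a g y z = g*z + a*(y + y*z)" using False by (simp add: G_def min_def algebra_simps)
  also have "\<dots> \<le> g*z + a*(g1+g2-z)" using s assms by (intro add_left_mono mult_left_mono) auto
  also have "\<dots> = (g-a)*z + a*(g1+g2)" by (simp add: algebra_simps)
  also have "\<dots> \<le> (g-a)*g2 + a*(g1+g2)" using False assms by (intro add_right_mono mult_left_mono) auto
  also have "\<dots> = a*g1 + g*g2" by (simp add: algebra_simps)
  finally show ?thesis .
qed

lemma G_ge:
  assumes "0 < a" "0 < g" "0 \<le> y" "0 \<le> z" "G a g y z \<le> P"
  shows "\<exists>g1 g2. 0 \<le> g1 \<and> 0 \<le> g2 \<and> a*g1 + g*g2 \<le> P \<and> y \<le> g1 \<and> z \<le> g2 \<and> (1+y)*(1+z) = 1+g1+g2"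
proof (cases "g \<le> a")
  case True
  then have m: "min a g = g" by simp
  have "G a g y z = a*y + g*(z + y*z)" unfolding G_def m by (simp add: algebra_simps)
  then show ?thesis
    using assms by (intro exI[of _ y] exI[of _ "z + y*z"]) (auto simp: algebra_simps)
next
  case False
  then have m: "min a g = a" by simp
  have "G a g y z = a*(y + y*z) + g*z" unfolding G_def m by (simp add: algebra_simps)
  then show ?thesis
    using assms by (intro exI[of _ "y + y*z"] exI[of _ z]) (auto simp: algebra_simps)
qed

lemma pent_iff:
  assumes "0 \<le> g1" "0 \<le> g2" "0 \<le> r1" "0 \<le> r2"
  shows "(r1 \<le> log 2 (1+g1) \<and> r2 \<le> log 2 (1+g2) \<and> r1 + r2 \<le> log 2 (1+g1+g2))
    \<longleftrightarrow> (2 powr r1 \<le> 1+g1 \<and> 2 powr r2 \<le> 1+g2 \<and> 2 powr r1 * 2 powr r2 \<le> 1+g1+g2)"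
  using assms by (simp add: le_log_iff powr_add)



lemma Cf_reg:
  assumes "0 < H" "0 < b0"
  shows "C_f D H b0 P x = reg (((x + D/2)^2+H^2)/b0) (((x - D/2)^2+H^2)/b0) P"
proof -
  define a where "a = ((x + D/2)^2+H^2)/b0"
  define g where "g = ((x - D/2)^2+H^2)/b0"
  have a0: "a > 0" unfolding a_def using assms by (simp add: add_nonneg_pos)
  have g0: "g > 0" unfolding g_def using assms by (simp add: add_nonneg_pos)
  have hh1: "h1 D H b0 x = 1/a" unfolding h1_def chan_gain_def a_def by simp
  have hh2: "h2 D H b0 x = 1/g" unfolding h2_def chan_gain_def g_def by simp
  have "C_f D H b0 P x = reg a g P"
  proof (intro set_eqI iffI)
    fix r assume "r \<in> C_f D H b0 P x"
    then obtain p1 p2 where pp: "p1 \<ge> 0" "p2 \<ge> 0" "p1 + p2 \<le> P" "r \<in> C_MAC D H b0 x p1 p2"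
      unfolding C_f_def by auto
    obtain r1 r2 where r: "r = (r1,r2)" by (cases r)
    define g1 where "g1 = p1/a"
    define g2 where "g2 = p2/g"
    have g1: "g1 \<ge> 0" "g2 \<ge> 0" using pp a0 g0 unfolding g1_def g2_def by auto
    have cm: "0 \<le> r1" "0 \<le> r2" "r1 \<le> log 2 (1+g1)" "r2 \<le> log 2 (1+g2)" "r1 + r2 \<le> log 2 (1+g1+g2)"
      using pp(4) unfolding r C_MAC_def hh1 hh2 g1_def g2_def by auto
    then have e: "2 powr r1 \<le> 1+g1" "2 powr r2 \<le> 1+g2" "2 powr r1 * 2 powr r2 \<le> 1+g1+g2"
      using pent_iff[OF g1 cm(1,2)] by auto
    have "G a g (2 powr r1 - 1) (2 powr r2 - 1) \<le> a*g1 + g*g2"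
      using e cm a0 g0 by (intro G_le) (auto simp: ge_one_powr_ge_zero)
    also have "a*g1 + g*g2 = p1 + p2" unfolding g1_def g2_def using a0 g0 by simp
    finally show "r \<in> reg a g P" using pp cm unfolding reg_def r by auto
  next
    fix r assume "r \<in> reg a g P"
    obtain r1 r2 where r: "r = (r1,r2)" by (cases r)
    have rr: "0 \<le> r1" "0 \<le> r2" "G a g (2 powr r1 - 1) (2 powr r2 - 1) \<le> P"
      using \<open>r \<in> reg a g P\<close> unfolding r reg_def by auto
    obtain g1 g2 where gg: "0 \<le> g1" "0 \<le> g2" "a*g1 + g*g2 \<le> P" "2 powr r1 - 1 \<le> g1"
       "2 powr r2 - 1 \<le> g2" "(1+(2 powr r1 - 1))*(1+(2 powr r2 - 1)) = 1+g1+g2"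
      using G_ge[OF a0 g0 _ _ rr(3)] rr by (auto simp: ge_one_powr_ge_zero)
    have LL: "r1 \<le> log 2 (1+g1) \<and> r2 \<le> log 2 (1+g2) \<and> r1 + r2 \<le> log 2 (1+g1+g2)"
      using pent_iff[OF gg(1,2) rr(1,2)] gg(4,5,6) by simp
    have e1: "a * g1 * h1 D H b0 x = g1" and e2: "g * g2 * h2 D H b0 x = g2"
      using a0 g0 hh1 hh2 by auto
    have inM: "r \<in> C_MAC D H b0 x (a*g1) (g*g2)"
      unfolding C_MAC_def r mem_Collect_eq prod.case e1 e2 using rr(1,2) LL by blast
    have inS: "C_MAC D H b0 x (a*g1) (g*g2) \<in> {C_MAC D H b0 x p1 p2 | p1 p2. p1 \<ge> 0 \<and> p2 \<ge> 0 \<and> p1 + p2 \<le> P}"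
      using gg a0 g0 by fastforce
    show "r \<in> C_f D H b0 P x" unfolding C_f_def by (rule UnionI[OF inS inM])
  qed
  then show ?thesis by (simp only: a_def g_def)
qed



lemma reg_alt: "reg a g P = {r. 0 \<le> fst r \<and> 0 \<le> snd r \<and> G a g (2 powr fst r - 1) (2 powr snd r - 1) \<le> P}"
  unfolding reg_def by auto

lemma reg_closed: "closed (reg a g P)"
  unfolding reg_alt G_def
  by (intro closed_Collect_conj closed_Collect_le continuous_intros) auto

lemma reg_bounded:
  assumes "0 < a" "0 < g" "0 \<le> P"
  shows "bounded (reg a g P)"
proof -
  have "reg a g P \<subseteq> cbox (0,0) (log 2 (1 + P/a), log 2 (1 + P/g))"
  proof
    fix r assume "r \<in> reg a g P"
    then obtain r1 r2 where r: "r = (r1,r2)" "0 \<le> r1" "0 \<le> r2"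
      "G a g (2 powr r1 - 1) (2 powr r2 - 1) \<le> P" unfolding reg_def by auto
    define y where "y = 2 powr r1 - 1"
    define z where "z = 2 powr r2 - 1"
    have yz: "0 \<le> y" "0 \<le> z" unfolding y_def z_def using r by (auto simp: ge_one_powr_ge_zero)
    have Gy: "a*y \<le> P" "g*z \<le> P"
    proof -
      have "0 \<le> min a g * y * z" using yz assms by simp
      then show "a*y \<le> P" "g*z \<le> P" using r(4) yz assms unfolding G_def y_def[symmetric] z_def[symmetric]
        by (smt (verit) mult_nonneg_nonneg)+
    qed
    have p1: "0 < 1 + P/a" "0 < 1 + P/g" using assms by (simp_all add: add_pos_nonneg)
    have "y \<le> P/a" using Gy assms by (simp add: field_simps)
    then have "2 powr r1 \<le> 1 + P/a" unfolding y_def by simp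
    then have b1: "r1 \<le> log 2 (1 + P/a)" using p1 by (subst le_log_iff) auto
    have "z \<le> P/g" using Gy assms by (simp add: field_simps)
    then have "2 powr r2 \<le> 1 + P/g" unfolding z_def by simp
    then have b2: "r2 \<le> log 2 (1 + P/g)" using p1 by (subst le_log_iff) auto
    show "r \<in> cbox (0,0) (log 2 (1 + P/a), log 2 (1 + P/g))"
      using r b1 b2 by (simp add: cbox_Pair_eq)
  qed
  then show ?thesis by (rule bounded_subset[OF bounded_cbox])
qed

lemma reg_compact:
  assumes "0 < a" "0 < g" "0 \<le> P"
  shows "compact (reg a g P)"
  using reg_closed reg_bounded[OF assms] by (simp add: compact_eq_bounded_closed)

lemma tri_eq:
  fixes a b c r1I r2I r1F r2F :: real
  assumes "0 < b" "a * r1I + b * r2I = c" "a * r1F + b * r2F = c" "r1I \<noteq> r1F"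
  shows "(let k = (r2I - r2F) / (r1I - r1F)
        in {(r1, r2). r2 \<le> k * (r1 - r1I) + r2I \<and> r1 \<ge> 0 \<and> r2 \<ge> 0})
       = {(r1, r2). a*r1 + b*r2 \<le> c \<and> r1 \<ge> 0 \<and> r2 \<ge> 0}"
proof -
  have d: "r1I - r1F \<noteq> 0" using assms by simp
  have "a*(r1I - r1F) = - b*(r2I - r2F)" using assms by (simp add: algebra_simps)
  then have k: "(r2I - r2F) / (r1I - r1F) = - a / b" using d assms
    by (simp add: field_simps)
  have "r2 \<le> (- a / b) * (r1 - r1I) + r2I \<longleftrightarrow> a*r1 + b*r2 \<le> c" for r1 r2
  proof -
    have "r2 \<le> (- a / b) * (r1 - r1I) + r2I \<longleftrightarrow> b*r2 \<le> b*((- a / b) * (r1 - r1I) + r2I)"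
      using assms by simp
    also have "b*((- a / b) * (r1 - r1I) + r2I) = - a*(r1 - r1I) + b*r2I" using assms by (simp add: field_simps)
    finally show ?thesis using assms by (simp add: algebra_simps)
  qed
  then show ?thesis unfolding Let_def k by auto
qed



theorem lemma5:
  fixes D H \<beta>0 Pbar xI xF x r1I r2I r1F r2F :: real
  assumes "D > 0" and "H > 0" and "\<beta>0 > 0" and "Pbar > 0"
    and "- D / 2 \<le> xI" and "xI < xF" and "xF \<le> D / 2"
    and "(r1I, r2I) \<in> frontier (C_f D H \<beta>0 Pbar xI)"
    and "(r1F, r2F) \<in> frontier (C_f D H \<beta>0 Pbar xF)"
    and "\<exists>a b c. a > 0 \<and> b > 0 \<and>
           (\<forall>r \<in> convex hull (C_f D H \<beta>0 Pbar xI \<union> C_f D H \<beta>0 Pbar xF).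
              a * fst r + b * snd r \<le> c) \<and>
           a * r1I + b * r2I = c \<and> a * r1F + b * r2F = c"
    and "r1I \<noteq> r1F"
    and "x \<in> {xI..xF}"
  shows "C_f D H \<beta>0 Pbar x \<subseteq> convex hull (C_f D H \<beta>0 Pbar xI \<union> C_f D H \<beta>0 Pbar xF)
     \<longleftrightarrow>
     C_f D H \<beta>0 Pbar x \<subseteq>
       (let k = (r2I - r2F) / (r1I - r1F)
        in {(r1, r2). r2 \<le> k * (r1 - r1I) + r2I \<and> r1 \<ge> 0 \<and> r2 \<ge> 0})"
proof -
  define al where "al t = ((t + D/2)^2+H^2)/\<beta>0" for t
  define ga where "ga t = ((t - D/2)^2+H^2)/\<beta>0" for t
  have al0: "al t > 0" for t unfolding al_def using assms by (simp add: add_nonneg_pos)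
  have ga0: "ga t > 0" for t unfolding ga_def using assms by (simp add: add_nonneg_pos)
  have Cf: "C_f D H \<beta>0 Pbar t = reg (al t) (ga t) Pbar" for t
    unfolding al_def ga_def using Cf_reg assms by blast
  define A where "A = reg (al xI) (ga xI) Pbar"
  define B where "B = reg (al xF) (ga xF) Pbar"
  define X where "X = reg (al x) (ga x) Pbar"
  define K where "K = convex hull (A \<union> B)"
  obtain a b c where abc: "a > 0" "b > 0" "\<forall>r\<in>K. a * fst r + b * snd r \<le> c"
    "a * r1I + b * r2I = c" "a * r1F + b * r2F = c"
    using assms(10) unfolding K_def A_def B_def Cf by blast
  have tri: "(let k = (r2I - r2F) / (r1I - r1F)
        in {(r1, r2). r2 \<le> k * (r1 - r1I) + r2I \<and> r1 \<ge> 0 \<and> r2 \<ge> 0})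
       = {(r1, r2). a*r1 + b*r2 \<le> c \<and> r1 \<ge> 0 \<and> r2 \<ge> 0}"
    using tri_eq[of b a r1I r2I c r1F r2F] abc assms(11) by blast
  have Xnn: "r \<in> X \<Longrightarrow> 0 \<le> fst r \<and> 0 \<le> snd r" for r unfolding X_def reg_def by auto
  have goal: "X \<subseteq> K \<longleftrightarrow> X \<subseteq> {(r1, r2). a*r1 + b*r2 \<le> c \<and> r1 \<ge> 0 \<and> r2 \<ge> 0}"
  proof
    assume "X \<subseteq> K"
    then show "X \<subseteq> {(r1, r2). a*r1 + b*r2 \<le> c \<and> r1 \<ge> 0 \<and> r2 \<ge> 0}"
      using abc(3) Xnn by fastforce
  next
    assume XL: "X \<subseteq> {(r1, r2). a*r1 + b*r2 \<le> c \<and> r1 \<ge> 0 \<and> r2 \<ge> 0}"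
    then have L: "\<forall>r\<in>X. a * fst r + b * snd r \<le> c" by auto
    show "X \<subseteq> K"
    proof
      fix p assume pX: "p \<in> X"
      show "p \<in> K"
      proof (rule ccontr)
        assume pK: "p \<notin> K"
        have AB: "A \<subseteq> K" "B \<subseteq> K" unfolding K_def by (auto intro: hull_inc)
        have cK: "compact K" unfolding K_def A_def B_def
          using reg_compact al0 ga0 assms(4)
          by (intro compact_convex_hull compact_Un) (auto simp: less_imp_le)
        have cvK: "convex K" unfolding K_def by simp
        obtain u be where sep: "inner u p < be" "\<forall>k\<in>K. inner u k > be"
          using separating_hyperplane_closed_point[OF cvK compact_imp_closed[OF cK] pK] by blast
        obtain v1 v2 where v: "u = (- v1, - v2)" by (metis add.inverse_inverse surj_pair)
        obtain p1 p2 where p: "p = (p1,p2)" by (cases p)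
        have pnn: "0 \<le> p1" "0 \<le> p2" using Xnn[OF pX] p by auto
        have vsep: "v1*k1 + v2*k2 < v1*p1 + v2*p2" if "(k1,k2) \<in> K" for k1 k2
          using sep that unfolding v p by force
        define w1 where "w1 = max v1 0"
        define w2 where "w2 = max v2 0"
        have w0: "0 \<le> w1" "0 \<le> w2" unfolding w1_def w2_def by auto
        have vp: "v1*p1 + v2*p2 \<le> w1*p1 + w2*p2"
          unfolding w1_def w2_def using pnn by (intro add_mono mult_right_mono) auto
        have wq: "w1*q1 + w2*q2 < w1*p1 + w2*p2"
          if q: "(q1,q2) \<in> reg al' ga' Pbar" "reg al' ga' Pbar \<subseteq> K" "al' > 0" "ga' > 0" for q1 q2 al' ga'
        proof -
          define q1' where "q1' = (if v1 < 0 then 0 else q1)"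
          define q2' where "q2' = (if v2 < 0 then 0 else q2)"
          have qnn: "0 \<le> q1" "0 \<le> q2" using q unfolding reg_def by auto
          have "(q1',q2') \<in> reg al' ga' Pbar"
            using reg_down[OF q(3,4) q(1)] qnn unfolding q1'_def q2'_def by auto
          then have "v1*q1' + v2*q2' < v1*p1 + v2*p2" using vsep q(2) by blast
          moreover have "v1*q1' + v2*q2' = w1*q1 + w2*q2"
            unfolding q1'_def q2'_def w1_def w2_def by auto
          ultimately show ?thesis using vp by linarith
        qed
        have cA: "closed A" "closed B" unfolding A_def B_def by (simp_all add: reg_closed)
        have qI: "(r1I,r2I) \<in> A" using assms(8) frontier_subset_closed[OF cA(1)]
          unfolding A_def Cf by blast
        have qF: "(r1F,r2F) \<in> B" using assms(9) frontier_subset_closed[OF cA(2)]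
          unfolding B_def Cf by blast
        have pA: "p \<notin> A" "p \<notin> B" using pK AB by auto
        have xr: "xI \<le> x" "x \<le> xF" using assms(12) by auto
        consider "w2*a \<le> w1*b" | "w1*b \<le> w2*a" by linarith
        then show False
        proof cases
          case 1
          show False
          proof (cases "x = xI")
            case True
            then show False using pX pA unfolding X_def A_def by simp
          next
            case False
            then have xl: "xI < x" using xr by simp
            have m1: "al xI \<le> al x"
              unfolding al_def using assms(3,5) xl
              by (intro divide_right_mono add_right_mono power_mono) auto
            have m2: "ga x < ga xI"
            proof -
              have "(D/2 - x)^2 < (D/2 - xI)^2"
                using xl xr assms(7) by (intro power_strict_mono) auto
              then show ?thesis unfolding ga_def using assms(3)
                by (simp add: divide_strict_right_mono power2_commute)
            qed
            show False
              using side[of "al xI" "al x" "ga x" "ga xI" Pbar a b r1I r2I c p1 p2 w1 w2]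
                al0 ga0 m1 m2 assms(4) abc qI L pX pA 1 w0 wq[OF qI[unfolded A_def]] AB
              unfolding A_def X_def p by auto
          qed
        next
          case 2
          show False
          proof (cases "x = xF")
            case True
            then show False using pX pA unfolding X_def B_def by simp
          next
            case False
            then have xl: "x < xF" using xr by simp
            have m1: "ga xF \<le> ga x"
            proof -
              have "(D/2 - xF)^2 \<le> (D/2 - x)^2"
                using xl xr assms(7) by (intro power_mono) auto
              then show ?thesis unfolding ga_def using assms(3)
                by (simp add: divide_right_mono power2_commute)
            qed
            have m2: "al x < al xF"
              unfolding al_def using assms(3,5) xl xr
              by (intro divide_strict_right_mono add_strict_right_mono power_strict_mono) auto
            have qF': "(r2F, r1F) \<in> reg (ga xF) (al xF) Pbar" using qF reg_swap unfolding B_def by blast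
            have L': "\<forall>r\<in>reg (ga x) (al x) Pbar. b * fst r + a * snd r \<le> c"
            proof
              fix r assume "r \<in> reg (ga x) (al x) Pbar"
              then have "(snd r, fst r) \<in> X" using reg_swap[of "snd r" "fst r"] unfolding X_def by simp
              then show "b * fst r + a * snd r \<le> c" using L by force
            qed
            have pX': "(p2,p1) \<in> reg (ga x) (al x) Pbar" using pX reg_swap unfolding X_def p by blast
            have pB': "(p2,p1) \<notin> reg (ga xF) (al xF) Pbar" using pA reg_swap unfolding B_def p by blast
            have wF: "w1*r1F + w2*r2F < w1*p1 + w2*p2"
              using wq[OF qF[unfolded B_def]] AB unfolding B_def by (simp add: al0 ga0)
            show False
              using side[of "ga xF" "ga x" "al x" "al xF" Pbar b a r2F r1F c p2 p1 w2 w1]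
                al0 ga0 m1 m2 assms(4) abc qF' L' pX' pB' 2 w0 wF
              by (simp add: algebra_simps)
          qed
        qed
      qed
    qed
  qed
  show ?thesis using goal unfolding tri[symmetric] X_def K_def A_def B_def Cf .
qed

end
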